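(* Let $\mathcal{A}$ be a pca with a partial numbering $\gamma : \omega \to \mathcal{A}$ and let $X = \{ \langle n, m, k\rangle \mid n, m, k \in \omega,\ \gamma(n) \cdot \gamma(m) = \gamma(k) \}$. Then $\mathcal{A}$ is embeddable in $\mathcal{G}^X$ and hence in $\mathcal{G}$.
   Context: A pca is a set with a partial binary application operation containing distinct $\mathrm{s},\mathrm{k}$ with $\mathrm{k}ab\downarrow=a$, $\mathrm{s}ab\downarrow$, $\mathrm{s}abc\simeq(ac)(bc)$. An embedding of pcas is an injective map $f$ with: if $ab$ is defined then $f(a)f(b)$ is defined and equals $f(ab)$. A partial numbering of $\mathcal{A}$ is a surjective partial function $\gamma:\omega\rightharpoonup\mathcal{A}$. $\mathcal{G}$ is $\mathcal{P}(\omega)$ with application $A\cdot B=\{n:\exists u\,(\langle n,u\rangle\in A\wedge D_u\subseteq B)\}$, where $\langle\cdot,\cdot\rangle$ is a bijective computable pairing with $\langle 0,0\rangle=0$ (extended to triples in the standard way) and $D_u$ is the finite set with canonical code $u$. $\mathcal{G}^X$ is the least class containing $X$ and all c.e. sets and closed under this application (equivalently, all sets enumeration-reducible to $X$). *)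

theory Defs
  imports Main "HOL-Library.Nat_Bijection"
begin

text \<open>A pca is a carrier set A with a partial application ap (None = undefined).
  papp lifts application to possibly-undefined terms (strict), so that equality of
  option values is Kleene equality.\<close>

fun papp :: "('a \<Rightarrow> 'a \<Rightarrow> 'a option) \<Rightarrow> 'a option \<Rightarrow> 'a option \<Rightarrow> 'a option" where
  "papp ap (Some a) (Some b) = ap a b"
| "papp ap _ _ = None"

definition pca :: "'a set \<Rightarrow> ('a \<Rightarrow> 'a \<Rightarrow> 'a option) \<Rightarrow> bool" where
  "pca A ap \<longleftrightarrow>
     (\<forall>a\<in>A. \<forall>b\<in>A. \<forall>c. ap a b = Some c \<longrightarrow> c \<in> A) \<and>
     (\<exists>s\<in>A. \<exists>k\<in>A. s \<noteq> k \<and>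
        (\<forall>a\<in>A. \<forall>b\<in>A. papp ap (papp ap (Some k) (Some a)) (Some b) = Some a) \<and>
        (\<forall>a\<in>A. \<forall>b\<in>A. papp ap (papp ap (Some s) (Some a)) (Some b) \<noteq> None) \<and>
        (\<forall>a\<in>A. \<forall>b\<in>A. \<forall>c\<in>A.
           papp ap (papp ap (papp ap (Some s) (Some a)) (Some b)) (Some c)
           = papp ap (papp ap (Some a) (Some c)) (papp ap (Some b) (Some c))))"

definition pca_embedding ::
  "'a set \<Rightarrow> ('a \<Rightarrow> 'a \<Rightarrow> 'a option) \<Rightarrow> 'b set \<Rightarrow> ('b \<Rightarrow> 'b \<Rightarrow> 'b option) \<Rightarrow> ('a \<Rightarrow> 'b) \<Rightarrow> bool" where
  "pca_embedding A ap B bp f \<longleftrightarrow>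
     inj_on f A \<and> f ` A \<subseteq> B \<and>
     (\<forall>a\<in>A. \<forall>b\<in>A. \<forall>c. ap a b = Some c \<longrightarrow> bp (f a) (f b) = Some (f c))"

definition partial_numbering :: "(nat \<Rightarrow> 'a option) \<Rightarrow> 'a set \<Rightarrow> bool" where
  "partial_numbering \<gamma> A \<longleftrightarrow> ran \<gamma> = A"

datatype recf = Z | S | Proj nat | Comp recf "recf list" | Prec recf recf | Mn recf

inductive eval :: "recf \<Rightarrow> nat list \<Rightarrow> nat \<Rightarrow> bool" where
  "eval Z xs 0"
| "eval S (x # xs) (Suc x)"
| "i < length xs \<Longrightarrow> eval (Proj i) xs (xs ! i)"
| "list_all2 (\<lambda>g y. eval g xs y) gs ys \<Longrightarrow> eval f ys z \<Longrightarrow> eval (Comp f gs) xs z"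
| "eval f xs y \<Longrightarrow> eval (Prec f g) (0 # xs) y"
| "eval (Prec f g) (n # xs) y \<Longrightarrow> eval g (n # y # xs) z \<Longrightarrow> eval (Prec f g) (Suc n # xs) z"
| "eval f (n # xs) 0 \<Longrightarrow> (\<forall>i<n. \<exists>y>0. eval f (i # xs) y) \<Longrightarrow> eval (Mn f) xs n"
monos list_all2_mono

definition ce :: "nat set \<Rightarrow> bool" where
  "ce W \<longleftrightarrow> (\<exists>f. W = {n. \<exists>y. eval f [n] y})"

text \<open>Pairing: Cantor pairing prod_encode (bijective, computable, pairs (0,0) to 0);
  canonical finite set codes: set_decode (binary expansion).\<close>
abbreviation pair :: "nat \<Rightarrow> nat \<Rightarrow> nat" where
  "pair n m \<equiv> prod_encode (n, m)"

abbreviation triple :: "nat \<Rightarrow> nat \<Rightarrow> nat \<Rightarrow> nat" where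
  "triple n m k \<equiv> pair n (pair m k)"

abbreviation D :: "nat \<Rightarrow> nat set" where
  "D u \<equiv> set_decode u"

definition gapp :: "nat set \<Rightarrow> nat set \<Rightarrow> nat set" where
  "gapp A B = {n. \<exists>u. pair n u \<in> A \<and> D u \<subseteq> B}"

definition Gap :: "nat set \<Rightarrow> nat set \<Rightarrow> nat set option" where
  "Gap A B = Some (gapp A B)"

inductive_set GX :: "nat set \<Rightarrow> nat set set" for X :: "nat set" where
  base: "X \<in> GX X"
| ce: "ce W \<Longrightarrow> W \<in> GX X"
| app: "A \<in> GX X \<Longrightarrow> B \<in> GX X \<Longrightarrow> gapp A B \<in> GX X"

end

theory Submission
  imports Defs
begin


definition rfn :: "nat \<Rightarrow> (nat list \<Rightarrow> nat) \<Rightarrow> bool" where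
  "rfn k g \<longleftrightarrow> (\<exists>f. \<forall>xs. length xs = k \<longrightarrow> (\<forall>y. eval f xs y \<longleftrightarrow> y = g xs))"

inductive_cases evZ: "eval Z xs y"
inductive_cases evS: "eval S xs y"
inductive_cases evP: "eval (Proj i) xs y"
inductive_cases evC: "eval (Comp f gs) xs y"
inductive_cases evPr: "eval (Prec f g) xs y"
inductive_cases evMn: "eval (Mn f) xs y"

lemma rfn_Z: "rfn k (\<lambda>_. 0)"
  unfolding rfn_def by (rule exI[of _ Z]) (auto elim: evZ intro: eval.intros)

lemma rfn_S: "rfn 1 (\<lambda>xs. Suc (hd xs))"
  unfolding rfn_def
  apply (rule exI[of _ S])
  apply (auto elim!: evS intro: eval.intros simp: length_Suc_conv)
  done

lemma rfn_Proj: "i < k \<Longrightarrow> rfn k (\<lambda>xs. xs ! i)"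
  unfolding rfn_def by (rule exI[of _ "Proj i"]) (auto elim: evP intro: eval.intros)

lemma rfn_cong: "rfn k g \<Longrightarrow> (\<And>xs. length xs = k \<Longrightarrow> g xs = g' xs) \<Longrightarrow> rfn k g'"
  unfolding rfn_def by metis

lemma rfn_comp:
  assumes "rfn m g" "length hs = m" "\<forall>h\<in>set hs. rfn k h"
  shows "rfn k (\<lambda>xs. g (map (\<lambda>h. h xs) hs))"
proof -
  obtain f where f: "\<forall>xs. length xs = m \<longrightarrow> (\<forall>y. eval f xs y \<longleftrightarrow> y = g xs)"
    using assms(1) unfolding rfn_def by blast
  have "\<forall>h\<in>set hs. \<exists>f. \<forall>xs. length xs = k \<longrightarrow> (\<forall>y. eval f xs y \<longleftrightarrow> y = h xs)"
    using assms(3) unfolding rfn_def by blast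
  from bchoice[OF this] obtain F where F: "\<forall>h\<in>set hs. \<forall>xs. length xs = k \<longrightarrow> (\<forall>y. eval (F h) xs y \<longleftrightarrow> y = h xs)"
    by blast
  have L: "list_all2 (\<lambda>g y. eval g xs y) (map F hs) ys \<longleftrightarrow> ys = map (\<lambda>h. h xs) hs"
    if len: "length xs = k" for xs ys
  proof
    assume a: "list_all2 (\<lambda>g y. eval g xs y) (map F hs) ys"
    then have l: "length ys = length hs" by (simp add: list_all2_conv_all_nth)
    show "ys = map (\<lambda>h. h xs) hs"
    proof (rule nth_equalityI)
      show "length ys = length (map (\<lambda>h. h xs) hs)" using l by simp
      fix i assume i: "i < length ys"
      then have "eval (F (hs ! i)) xs (ys ! i)" using a l by (simp add: list_all2_conv_all_nth)
      moreover have "hs ! i \<in> set hs" using i l by simp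
      ultimately show "ys ! i = map (\<lambda>h. h xs) hs ! i" using F len i l by simp
    qed
  next
    assume "ys = map (\<lambda>h. h xs) hs"
    then show "list_all2 (\<lambda>g y. eval g xs y) (map F hs) ys"
      using F len by (simp add: list_all2_conv_all_nth)
  qed
  show ?thesis unfolding rfn_def
  proof (rule exI[of _ "Comp f (map F hs)"], intro allI impI)
    fix xs :: "nat list" and y :: nat assume len: "length xs = k"
    show "eval (Comp f (map F hs)) xs y \<longleftrightarrow> y = g (map (\<lambda>h. h xs) hs)"
    proof
      assume "eval (Comp f (map F hs)) xs y"
      then obtain ys where a: "list_all2 (\<lambda>g y. eval g xs y) (map F hs) ys" and b: "eval f ys y"
        by (rule evC) blast
      from a have "ys = map (\<lambda>h. h xs) hs" using L[OF len] by blast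
      then show "y = g (map (\<lambda>h. h xs) hs)"
        using f assms(2) b by auto
    next
      assume y: "y = g (map (\<lambda>h. h xs) hs)"
      have a: "list_all2 (\<lambda>g y. eval g xs y) (map F hs) (map (\<lambda>h. h xs) hs)"
        using L[OF len] by blast
      have b: "eval f (map (\<lambda>h. h xs) hs) y" using f assms(2) y by auto
      show "eval (Comp f (map F hs)) xs y" by (rule eval.intros(4)[OF a b])
    qed
  qed
qed

fun prec :: "(nat list \<Rightarrow> nat) \<Rightarrow> (nat list \<Rightarrow> nat) \<Rightarrow> nat \<Rightarrow> nat list \<Rightarrow> nat" where
  "prec g0 g1 0 ys = g0 ys"
| "prec g0 g1 (Suc t) ys = g1 (t # prec g0 g1 t ys # ys)"

lemma rfn_prec:
  assumes "rfn k g0" "rfn (Suc (Suc k)) g1"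
  shows "rfn (Suc k) (\<lambda>xs. prec g0 g1 (hd xs) (tl xs))"
proof -
  obtain f0 where f0: "\<forall>xs. length xs = k \<longrightarrow> (\<forall>y. eval f0 xs y \<longleftrightarrow> y = g0 xs)"
    using assms(1) unfolding rfn_def by blast
  obtain f1 where f1: "\<forall>xs. length xs = Suc (Suc k) \<longrightarrow> (\<forall>y. eval f1 xs y \<longleftrightarrow> y = g1 xs)"
    using assms(2) unfolding rfn_def by blast
  have main: "length ys = k \<Longrightarrow> (eval (Prec f0 f1) (t # ys) y \<longleftrightarrow> y = prec g0 g1 t ys)" for t ys y
  proof (induction t arbitrary: y)
    case 0
    then show ?case using f0 by (auto elim: evPr intro: eval.intros)
  next
    case (Suc t)
    show ?case
    proof
      assume "eval (Prec f0 f1) (Suc t # ys) y"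
      then show "y = prec g0 g1 (Suc t) ys"
        by (rule evPr) (use Suc f1 in auto)
    next
      assume "y = prec g0 g1 (Suc t) ys"
      then show "eval (Prec f0 f1) (Suc t # ys) y"
        using Suc f1 by (auto intro: eval.intros(6))
    qed
  qed
  show ?thesis unfolding rfn_def
    by (rule exI[of _ "Prec f0 f1"]) (auto simp: length_Suc_conv main)
qed

lemma rfn_mn:
  assumes "rfn (Suc k) g"
  shows "\<exists>f. \<forall>xs. length xs = k \<longrightarrow> ((\<exists>y. eval f xs y) \<longleftrightarrow> (\<exists>n. g (n # xs) = 0))"
proof -
  obtain f where f: "\<forall>xs. length xs = Suc k \<longrightarrow> (\<forall>y. eval f xs y \<longleftrightarrow> y = g xs)"
    using assms unfolding rfn_def by blast
  show ?thesis
  proof (rule exI[of _ "Mn f"], intro allI impI iffI)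
    fix xs :: "nat list" assume len: "length xs = k"
    { assume "\<exists>y. eval (Mn f) xs y"
      then obtain y where "eval (Mn f) xs y" by blast
      then show "\<exists>n. g (n # xs) = 0" by (rule evMn) (use f len in auto) }
    { assume "\<exists>n. g (n # xs) = 0"
      then obtain n where n: "g (n # xs) = 0" by blast
      define m where "m = (LEAST n. g (n # xs) = 0)"
      have m: "g (m # xs) = 0" unfolding m_def by (rule LeastI, rule n)
      have "\<forall>i<m. \<exists>y>0. eval f (i # xs) y"
        using f len not_less_Least[of _ "\<lambda>n. g (n # xs) = 0"] unfolding m_def by auto
      then have "eval (Mn f) xs m" using m f len by (auto intro: eval.intros)
      then show "\<exists>y. eval (Mn f) xs y" by blast }
  qed
qed

lemma rfn_ce:
  assumes "rfn 2 g"
  shows "ce {x. \<exists>n. g [n, x] = 0}"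
proof -
  obtain f where f: "\<forall>xs. length xs = 1 \<longrightarrow> ((\<exists>y. eval f xs y) \<longleftrightarrow> (\<exists>n. g (n # xs) = 0))"
    using rfn_mn[of 1 g] assms by (auto simp: numeral_2_eq_2)
  show ?thesis unfolding ce_def
    by (rule exI[of _ f]) (use f in auto)
qed



lemma rfn_comp1: "rfn 1 g \<Longrightarrow> rfn k a \<Longrightarrow> rfn k (\<lambda>xs. g [a xs])"
  using rfn_comp[of 1 g "[a]" k] by simp

lemma rfn_comp2: "rfn 2 g \<Longrightarrow> rfn k a \<Longrightarrow> rfn k b \<Longrightarrow> rfn k (\<lambda>xs. g [a xs, b xs])"
  using rfn_comp[of 2 g "[a, b]" k] by simp

lemma rfn_op1: "rfn 1 (\<lambda>xs. f (xs ! 0)) \<Longrightarrow> rfn k a \<Longrightarrow> rfn k (\<lambda>xs. f (a xs))"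
  using rfn_comp1[of "\<lambda>xs. f (xs ! 0)" k a] by simp

lemma rfn_op2: "rfn 2 (\<lambda>xs. f (xs ! 0) (xs ! 1)) \<Longrightarrow> rfn k a \<Longrightarrow> rfn k b \<Longrightarrow> rfn k (\<lambda>xs. f (a xs) (b xs))"
  using rfn_comp2[of "\<lambda>xs. f (xs ! 0) (xs ! 1)" k a b] by simp

lemma rfn_const: "rfn k (\<lambda>_. c)"
proof (induction c)
  case 0 then show ?case by (rule rfn_Z)
next
  case (Suc c)
  from rfn_comp1[OF rfn_S Suc] show ?case by simp
qed

lemma rfn_reindex:
  assumes "rfn k g" "length is = k" "\<forall>i\<in>set is. i < m"
  shows "rfn m (\<lambda>zs. g (map (nth zs) is))"
proof -
  have "rfn m (\<lambda>zs. g (map (\<lambda>h. h zs) (map (\<lambda>i zs. zs ! i) is)))"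
    by (rule rfn_comp) (use assms rfn_Proj in auto)
  then show ?thesis by (simp add: comp_def)
qed

lemma rfn_prec_at:
  assumes "rfn k g0" "rfn (Suc (Suc k)) g1" "rfn k t"
  shows "rfn k (\<lambda>xs. prec g0 g1 (t xs) xs)"
proof -
  have P: "rfn (Suc k) (\<lambda>xs. prec g0 g1 (hd xs) (tl xs))" by (rule rfn_prec[OF assms(1,2)])
  have "rfn k (\<lambda>xs. (\<lambda>xs. prec g0 g1 (hd xs) (tl xs)) (map (\<lambda>h. h xs) (t # map (\<lambda>i xs. xs ! i) [0..<k])))"
    by (rule rfn_comp[OF P]) (use assms(3) rfn_Proj in auto)
  then show ?thesis
    by (rule rfn_cong) (simp add: comp_def, metis map_nth)
qed


lemma rfn_Suc: "rfn k a \<Longrightarrow> rfn k (\<lambda>xs. Suc (a xs))"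
  using rfn_comp1[OF rfn_S] by simp

lemma map_nth_upt_drop: "map (nth zs) [n..<length zs] = drop n zs"
  by (rule nth_equalityI) auto

lemma rfn_drop2: "rfn k a \<Longrightarrow> rfn (Suc (Suc k)) (\<lambda>zs. a (drop 2 zs))"
proof -
  assume a: "rfn k a"
  have "rfn (Suc (Suc k)) (\<lambda>zs. a (map (nth zs) [2..<Suc (Suc k)]))"
    by (rule rfn_reindex[OF a]) auto
  then show ?thesis
    by (rule rfn_cong) (metis map_nth_upt_drop)
qed

lemma rfn_P0: "rfn (Suc (Suc k)) (\<lambda>zs. zs ! 0)" by (rule rfn_Proj) simp
lemma rfn_P1: "rfn (Suc (Suc k)) (\<lambda>zs. zs ! 1)" by (rule rfn_Proj) simp

lemma prec_add: "prec a (\<lambda>zs. Suc (zs ! 1)) t xs = a xs + t"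
  by (induction t) auto

lemma rfn_add: assumes "rfn k a" "rfn k b" shows "rfn k (\<lambda>xs. a xs + b xs)"
proof -
  have "rfn k (\<lambda>xs. prec a (\<lambda>zs. Suc (zs ! 1)) (b xs) xs)"
    by (rule rfn_prec_at[OF assms(1) _ assms(2)]) (rule rfn_Suc[OF rfn_P1])
  then show ?thesis unfolding prec_add .
qed

lemma prec_mult: "prec (\<lambda>_. 0) (\<lambda>zs. zs ! 1 + a (drop 2 zs)) t xs = a xs * t"
  by (induction t) auto

lemma rfn_mult: assumes "rfn k a" "rfn k b" shows "rfn k (\<lambda>xs. a xs * b xs)"
proof -
  have "rfn k (\<lambda>xs. prec (\<lambda>_. 0) (\<lambda>zs. zs ! 1 + a (drop 2 zs)) (b xs) xs)"
    by (rule rfn_prec_at[OF rfn_const _ assms(2)]) (rule rfn_add[OF rfn_P1 rfn_drop2[OF assms(1)]])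
  then show ?thesis unfolding prec_mult by (simp add: mult.commute)
qed

lemma prec_pred: "prec (\<lambda>_. 0) (\<lambda>zs. zs ! 0) t xs = t - 1"
  by (induction t) auto

lemma rfn_pred: assumes "rfn k a" shows "rfn k (\<lambda>xs. a xs - 1)"
proof -
  have "rfn k (\<lambda>xs. prec (\<lambda>_. 0) (\<lambda>zs. zs ! 0) (a xs) xs)"
    by (rule rfn_prec_at[OF rfn_const rfn_P0 assms(1)])
  then show ?thesis unfolding prec_pred .
qed

lemma prec_sub: "prec a (\<lambda>zs. zs ! 1 - 1) t xs = a xs - t"
  by (induction t) auto

lemma rfn_sub: assumes "rfn k a" "rfn k b" shows "rfn k (\<lambda>xs. a xs - b xs)"
proof -
  have "rfn k (\<lambda>xs. prec a (\<lambda>zs. zs ! 1 - 1) (b xs) xs)"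
    by (rule rfn_prec_at[OF assms(1) _ assms(2)]) (rule rfn_pred[OF rfn_P1])
  then show ?thesis unfolding prec_sub .
qed

lemma prec_pow2: "prec (\<lambda>_. 1) (\<lambda>zs. zs ! 1 + zs ! 1) t xs = 2 ^ t"
  by (induction t) auto

lemma rfn_pow2: assumes "rfn k a" shows "rfn k (\<lambda>xs. 2 ^ a xs)"
proof -
  have "rfn k (\<lambda>xs. prec (\<lambda>_. 1) (\<lambda>zs. zs ! 1 + zs ! 1) (a xs) xs)"
    by (rule rfn_prec_at[OF rfn_const _ assms(1)]) (rule rfn_add[OF rfn_P1 rfn_P1])
  then show ?thesis unfolding prec_pow2 .
qed

lemma prec_tri: "prec (\<lambda>_. 0) (\<lambda>zs. zs ! 1 + Suc (zs ! 0)) t xs = triangle t"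
  by (induction t) auto

lemma rfn_tri: assumes "rfn k a" shows "rfn k (\<lambda>xs. triangle (a xs))"
proof -
  have "rfn k (\<lambda>xs. prec (\<lambda>_. 0) (\<lambda>zs. zs ! 1 + Suc (zs ! 0)) (a xs) xs)"
    by (rule rfn_prec_at[OF rfn_const _ assms(1)]) (rule rfn_add[OF rfn_P1 rfn_Suc[OF rfn_P0]])
  then show ?thesis unfolding prec_tri .
qed

lemma rfn_pair: "rfn k a \<Longrightarrow> rfn k b \<Longrightarrow> rfn k (\<lambda>xs. prod_encode (a xs, b xs))"
  unfolding prod_encode_def by (simp add: rfn_add rfn_tri)

definition dec :: "nat \<Rightarrow> (nat list \<Rightarrow> bool) \<Rightarrow> bool" where
  "dec k P \<longleftrightarrow> rfn k (\<lambda>xs. if P xs then 1 else 0)"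

lemma dec_eq: assumes "rfn k a" "rfn k b" shows "dec k (\<lambda>xs. a xs = b xs)"
proof -
  have "rfn k (\<lambda>xs. 1 - ((a xs - b xs) + (b xs - a xs)))"
    by (intro rfn_sub rfn_add rfn_const assms)
  then show ?thesis unfolding dec_def by (rule rfn_cong) auto
qed

lemma dec_less: assumes "rfn k a" "rfn k b" shows "dec k (\<lambda>xs. a xs < b xs)"
proof -
  have "rfn k (\<lambda>xs. 1 - (1 - (b xs - a xs)))"
    by (intro rfn_sub rfn_const assms)
  then show ?thesis unfolding dec_def by (rule rfn_cong) auto
qed

lemma dec_not: assumes "dec k P" shows "dec k (\<lambda>xs. \<not> P xs)"
proof -
  have "rfn k (\<lambda>xs. 1 - (if P xs then 1 else 0))"
    using assms unfolding dec_def by (intro rfn_sub rfn_const)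
  then show ?thesis unfolding dec_def by (rule rfn_cong) auto
qed

lemma dec_and: assumes "dec k P" "dec k Q" shows "dec k (\<lambda>xs. P xs \<and> Q xs)"
proof -
  have "rfn k (\<lambda>xs. (if P xs then 1 else 0) * (if Q xs then 1 else 0))"
    using assms unfolding dec_def by (intro rfn_mult)
  then show ?thesis unfolding dec_def by (rule rfn_cong) auto
qed

lemma dec_or: "dec k P \<Longrightarrow> dec k Q \<Longrightarrow> dec k (\<lambda>xs. P xs \<or> Q xs)"
  using dec_not[OF dec_and[OF dec_not dec_not], of k P Q] by simp

lemma dec_true: "dec k (\<lambda>_. True)"
  unfolding dec_def using rfn_const by simp

lemma rfn_if: assumes "dec k P" "rfn k a" "rfn k b" shows "rfn k (\<lambda>xs. if P xs then a xs else b xs)"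
proof -
  have "rfn k (\<lambda>xs. (if P xs then 1 else 0) * a xs + (1 - (if P xs then 1 else 0)) * b xs)"
    using assms unfolding dec_def by (intro rfn_add rfn_mult rfn_sub rfn_const)
  then show ?thesis by (rule rfn_cong) auto
qed

lemma prec_mod2: "prec (\<lambda>_. 0) (\<lambda>zs. 1 - zs ! 1) t xs = t mod 2"
  by (induction t) (auto simp: mod_Suc)

lemma dec_odd: assumes "rfn k a" shows "dec k (\<lambda>xs. odd (a xs))"
proof -
  have "rfn k (\<lambda>xs. prec (\<lambda>_. 0) (\<lambda>zs. 1 - zs ! 1) (a xs) xs)"
    by (rule rfn_prec_at[OF rfn_const _ assms(1)]) (rule rfn_sub[OF rfn_const rfn_P1])
  then have "rfn k (\<lambda>xs. a xs mod 2)" unfolding prec_mod2 .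
  then show ?thesis unfolding dec_def
    by (rule rfn_cong) (auto simp: odd_iff_mod_2_eq_one)
qed

lemma dec_reindex:
  assumes "dec k P" "length is = k" "\<forall>i\<in>set is. i < m"
  shows "dec m (\<lambda>zs. P (map (nth zs) is))"
  using rfn_reindex[of k "\<lambda>xs. if P xs then 1 else 0" "is" m] assms unfolding dec_def by simp

fun bmin :: "(nat \<Rightarrow> bool) \<Rightarrow> nat \<Rightarrow> nat" where
  "bmin P 0 = 0"
| "bmin P (Suc t) = (if bmin P t = t \<and> \<not> P t then Suc t else bmin P t)"

lemma bmin_props: "bmin P b \<le> b \<and> (\<forall>y<bmin P b. \<not> P y) \<and> (bmin P b < b \<longrightarrow> P (bmin P b))"
proof (induction b)
  case 0 then show ?case by simp
next
  case (Suc b)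
  show ?case
  proof (cases "bmin P b = b \<and> \<not> P b")
    case True
    then show ?thesis using Suc by (simp add: less_Suc_eq)
  next
    case False
    then have e: "bmin P (Suc b) = bmin P b" by simp
    show ?thesis
    proof (cases "bmin P b = b")
      case True
      then show ?thesis using Suc False e by simp
    next
      case False
      then show ?thesis using Suc e by simp
    qed
  qed
qed

lemma bmin_eqI: assumes "P y" "y < b" "\<forall>y'<y. \<not> P y'" shows "bmin P b = y"
proof -
  have p: "bmin P b \<le> b" "\<forall>y<bmin P b. \<not> P y" "bmin P b < b \<longrightarrow> P (bmin P b)"
    using bmin_props[of P b] by auto
  have "\<not> y < bmin P b" using p(2) assms(1) by blast
  moreover have "\<not> bmin P b < y"
  proof
    assume "bmin P b < y"
    then have "P (bmin P b)" using p(3) assms(2) by simp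
    then show False using assms(3) \<open>bmin P b < y\<close> by blast
  qed
  ultimately show ?thesis by simp
qed

lemma bmin_eq_b: "bmin P b = b \<longleftrightarrow> (\<forall>y<b. \<not> P y)"
proof -
  have p: "bmin P b \<le> b" "\<forall>y<bmin P b. \<not> P y" "bmin P b < b \<longrightarrow> P (bmin P b)"
    using bmin_props[of P b] by auto
  show ?thesis
  proof
    assume "bmin P b = b" then show "\<forall>y<b. \<not> P y" using p(2) by simp
  next
    assume a: "\<forall>y<b. \<not> P y"
    show "bmin P b = b"
    proof (rule ccontr)
      assume "bmin P b \<noteq> b"
      then have "bmin P b < b" using p(1) by simp
      then show False using p(3) a by blast
    qed
  qed
qed

lemma prec_bmin:
  "prec (\<lambda>_. 0) (\<lambda>zs. if zs ! 1 = zs ! 0 \<and> \<not> P (zs ! 0 # drop 2 zs) then Suc (zs ! 0) else zs ! 1) t xs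
   = bmin (\<lambda>y. P (y # xs)) t"
  by (induction t) auto

lemma dec_hd_drop2: "dec (Suc k) P \<Longrightarrow> dec (Suc (Suc k)) (\<lambda>zs. P (zs ! 0 # drop 2 zs))"
proof -
  assume P: "dec (Suc k) P"
  have "dec (Suc (Suc k)) (\<lambda>zs. P (map (nth zs) (0 # [2..<Suc (Suc k)])))"
    by (rule dec_reindex[OF P]) auto
  then show ?thesis unfolding dec_def
    by (rule rfn_cong) (metis list.simps(9) map_nth_upt_drop)
qed

lemma rfn_bmin:
  assumes "dec (Suc k) P" "rfn k b"
  shows "rfn k (\<lambda>xs. bmin (\<lambda>y. P (y # xs)) (b xs))"
proof -
  have g1: "rfn (Suc (Suc k)) (\<lambda>zs. if zs ! 1 = zs ! 0 \<and> \<not> P (zs ! 0 # drop 2 zs) then Suc (zs ! 0) else zs ! 1)"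
    by (intro rfn_if dec_and dec_eq dec_not dec_hd_drop2 assms rfn_P0 rfn_P1 rfn_Suc)
  show ?thesis
    using rfn_prec_at[OF rfn_const[of k 0] g1 assms(2)] unfolding prec_bmin .
qed

lemma dec_ball:
  assumes "dec (Suc k) P" "rfn k b"
  shows "dec k (\<lambda>xs. \<forall>y<b xs. P (y # xs))"
proof -
  have "rfn k (\<lambda>xs. bmin (\<lambda>y. \<not> P (y # xs)) (b xs))"
    by (rule rfn_bmin[OF dec_not[OF assms(1)] assms(2)])
  then have "dec k (\<lambda>xs. bmin (\<lambda>y. \<not> P (y # xs)) (b xs) = b xs)"
    by (rule dec_eq[OF _ assms(2)])
  then show ?thesis unfolding bmin_eq_b by simp
qed

lemma dec_bex:
  assumes "dec (Suc k) P" "rfn k b"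
  shows "dec k (\<lambda>xs. \<exists>y<b xs. P (y # xs))"
  using dec_not[OF dec_ball[OF dec_not[OF assms(1)] assms(2)]] by simp



lemma dec_cong: "dec k P \<Longrightarrow> (\<And>xs. length xs = k \<Longrightarrow> P xs = Q xs) \<Longrightarrow> dec k Q"
  unfolding dec_def by (erule rfn_cong) simp

lemma dec_le: "rfn k a \<Longrightarrow> rfn k b \<Longrightarrow> dec k (\<lambda>xs. a xs \<le> b xs)"
  using dec_less[of k a "\<lambda>xs. Suc (b xs)"] rfn_Suc[of k b] by (simp add: less_Suc_eq_le)

definition pf :: "nat \<Rightarrow> nat" where "pf p = fst (prod_decode p)"
definition ps :: "nat \<Rightarrow> nat" where "ps p = snd (prod_decode p)"

lemma pf_pe[simp]: "pf (prod_encode (x, y)) = x" by (simp add: pf_def)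
lemma ps_pe[simp]: "ps (prod_encode (x, y)) = y" by (simp add: ps_def)
lemma pe_pf_ps: "prod_encode (pf p, ps p) = p" by (simp add: pf_def ps_def)

lemma pf_bmin: "pf p = bmin (\<lambda>x. \<exists>y<Suc p. prod_encode (x, y) = p) (Suc p)"
proof (rule sym, rule bmin_eqI)
  show "\<exists>y<Suc p. prod_encode (pf p, y) = p"
    by (metis le_imp_less_Suc le_prod_encode_2 pe_pf_ps)
  show "pf p < Suc p" by (metis le_imp_less_Suc le_prod_encode_1 pe_pf_ps)
  show "\<forall>y'<pf p. \<not> (\<exists>y<Suc p. prod_encode (y', y) = p)"
    by (metis less_irrefl pf_pe)
qed

lemma ps_bmin: "ps p = bmin (\<lambda>y. \<exists>x<Suc p. prod_encode (x, y) = p) (Suc p)"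
proof (rule sym, rule bmin_eqI)
  show "\<exists>x<Suc p. prod_encode (x, ps p) = p"
    by (metis le_imp_less_Suc le_prod_encode_1 pe_pf_ps)
  show "ps p < Suc p" by (metis le_imp_less_Suc le_prod_encode_2 pe_pf_ps)
  show "\<forall>y'<ps p. \<not> (\<exists>x<Suc p. prod_encode (x, y') = p)"
    by (metis less_irrefl ps_pe)
qed

lemma rfn_unary_bmin:
  assumes "dec 2 (\<lambda>zs. Q (zs ! 0) (zs ! 1))"
  shows "rfn 1 (\<lambda>xs. bmin (\<lambda>y. Q y (xs ! 0)) (Suc (xs ! 0)))"
proof -
  have "rfn 1 (\<lambda>xs. bmin (\<lambda>y. (\<lambda>zs. Q (zs ! 0) (zs ! 1)) (y # xs)) (Suc (xs ! 0)))"
    by (rule rfn_bmin) (use assms in \<open>auto simp: numeral_2_eq_2 intro: rfn_Suc rfn_Proj\<close>)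
  then show ?thesis by simp
qed

lemma rfn_pf1: "rfn 1 (\<lambda>xs. pf (xs ! 0))"
proof -
  have "dec 3 (\<lambda>ws. prod_encode (ws ! 1, ws ! 0) = ws ! 2)"
    by (intro dec_eq rfn_pair rfn_Proj) auto
  then have "dec 2 (\<lambda>zs. \<exists>y<Suc (zs ! 1). (\<lambda>ws. prod_encode (ws ! 1, ws ! 0) = ws ! 2) (y # zs))"
    by (intro dec_bex) (auto simp: numeral_3_eq_3 numeral_2_eq_2 intro: rfn_Suc rfn_Proj)
  then have "dec 2 (\<lambda>zs. \<exists>y<Suc (zs ! 1). prod_encode (zs ! 0, y) = zs ! 1)"
    by simp
  from rfn_unary_bmin[OF this] show ?thesis unfolding pf_bmin .
qed

lemma rfn_ps1: "rfn 1 (\<lambda>xs. ps (xs ! 0))"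
proof -
  have "dec 3 (\<lambda>ws. prod_encode (ws ! 0, ws ! 1) = ws ! 2)"
    by (intro dec_eq rfn_pair rfn_Proj) auto
  then have "dec 2 (\<lambda>zs. \<exists>y<Suc (zs ! 1). (\<lambda>ws. prod_encode (ws ! 0, ws ! 1) = ws ! 2) (y # zs))"
    by (intro dec_bex) (auto simp: numeral_3_eq_3 numeral_2_eq_2 intro: rfn_Suc rfn_Proj)
  then have "dec 2 (\<lambda>zs. \<exists>x<Suc (zs ! 1). prod_encode (x, zs ! 0) = zs ! 1)"
    by simp
  from rfn_unary_bmin[OF this] show ?thesis unfolding ps_bmin .
qed

definition lg :: "nat \<Rightarrow> nat" where "lg u = bmin (\<lambda>e. 2 ^ e = u) (Suc u)"

lemma lg_pow[simp]: "lg (2 ^ e) = e"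
  unfolding lg_def
proof (rule bmin_eqI)
  have "e < 2 ^ e" by (rule less_exp)
  then show "e < Suc (2 ^ e)" by linarith
qed auto

lemma rfn_lg1: "rfn 1 (\<lambda>xs. lg (xs ! 0))"
proof -
  have "dec 2 (\<lambda>zs. 2 ^ (zs ! 0) = zs ! 1)"
    by (intro dec_eq rfn_pow2 rfn_Proj) auto
  from rfn_unary_bmin[OF this] show ?thesis unfolding lg_def .
qed

lemma div2_bmin: "x div 2 = bmin (\<lambda>q. x < 2 * q + 2) (Suc x)"
  by (rule sym, rule bmin_eqI) auto

lemma rfn_div21: "rfn 1 (\<lambda>xs. (xs ! 0) div 2)"
proof -
  have "dec 2 (\<lambda>zs. zs ! 1 < 2 * zs ! 0 + 2)"
    by (intro dec_less rfn_add rfn_mult rfn_const rfn_Proj) auto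
  from rfn_unary_bmin[OF this] show ?thesis unfolding div2_bmin .
qed

lemma rfn_pf: "rfn k a \<Longrightarrow> rfn k (\<lambda>xs. pf (a xs))" by (rule rfn_op1[OF rfn_pf1])
lemma rfn_ps: "rfn k a \<Longrightarrow> rfn k (\<lambda>xs. ps (a xs))" by (rule rfn_op1[OF rfn_ps1])
lemma rfn_lg: "rfn k a \<Longrightarrow> rfn k (\<lambda>xs. lg (a xs))" by (rule rfn_op1[OF rfn_lg1])
lemma rfn_div2: "rfn k a \<Longrightarrow> rfn k (\<lambda>xs. a xs div 2)" by (rule rfn_op1[OF rfn_div21])

lemma memD_iff: "t \<in> set_decode v \<longleftrightarrow> (\<exists>q<Suc v. q * 2 ^ t \<le> v \<and> v < Suc q * 2 ^ t \<and> odd q)"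
proof
  assume "t \<in> set_decode v"
  then have "odd (v div 2 ^ t)" by (simp add: set_decode_def)
  moreover have "v div 2 ^ t * 2 ^ t \<le> v" by simp
  moreover have "v < Suc (v div 2 ^ t) * 2 ^ t"
  proof -
    have "v mod 2 ^ t < 2 ^ t" by simp
    moreover have "v = v div 2 ^ t * 2 ^ t + v mod 2 ^ t" by (rule div_mult_mod_eq[symmetric])
    ultimately show ?thesis by (metis add_less_cancel_left mult_Suc add.commute)
  qed
  moreover have "v div 2 ^ t < Suc v" by (meson div_le_dividend le_imp_less_Suc)
  ultimately show "\<exists>q<Suc v. q * 2 ^ t \<le> v \<and> v < Suc q * 2 ^ t \<and> odd q" by blast
next
  assume "\<exists>q<Suc v. q * 2 ^ t \<le> v \<and> v < Suc q * 2 ^ t \<and> odd q"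
  then obtain q where q: "q * 2 ^ t \<le> v" "v < Suc q * 2 ^ t" "odd q" by blast
  have "v div 2 ^ t = q"
    using q(1,2) by (metis div_nat_eqI mult.commute)
  then show "t \<in> set_decode v" using q(3) by (simp add: set_decode_def)
qed

lemma dec_memD1: "dec 2 (\<lambda>xs. xs ! 0 \<in> set_decode (xs ! 1))"
proof -
  have "dec 3 (\<lambda>ws. ws ! 0 * 2 ^ ws ! 1 \<le> ws ! 2 \<and> ws ! 2 < Suc (ws ! 0) * 2 ^ ws ! 1 \<and> odd (ws ! 0))"
    by (intro dec_and dec_le dec_less dec_odd rfn_mult rfn_pow2 rfn_Suc rfn_Proj) auto
  then have "dec 2 (\<lambda>zs. \<exists>y<Suc (zs ! 1). (\<lambda>ws. ws ! 0 * 2 ^ ws ! 1 \<le> ws ! 2 \<and> ws ! 2 < Suc (ws ! 0) * 2 ^ ws ! 1 \<and> odd (ws ! 0)) (y # zs))"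
    by (intro dec_bex) (auto simp: numeral_3_eq_3 numeral_2_eq_2 intro: rfn_Suc rfn_Proj)
  then show ?thesis by (rule dec_cong) (simp add: memD_iff)
qed



lemma dec_op2: assumes "dec 2 (\<lambda>xs. R (xs ! 0) (xs ! 1))" "rfn k a" "rfn k b" shows "dec k (\<lambda>xs. R (a xs) (b xs))"
proof -
  have "rfn k (\<lambda>xs. (\<lambda>x y. if R x y then 1 else 0) (a xs) (b xs))"
    by (rule rfn_op2[OF _ assms(2,3)]) (use assms(1) in \<open>simp add: dec_def\<close>)
  then show ?thesis by (simp add: dec_def)
qed

lemma dec_memD: "rfn k a \<Longrightarrow> rfn k b \<Longrightarrow> dec k (\<lambda>xs. a xs \<in> set_decode (b xs))"
  by (rule dec_op2[OF dec_memD1])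

definition eA where "eA p = lg (ps p)"
definition mA where "mA p = pf (eA p)"
definition infA where "infA p = ps (eA p) div 2"
definition nA where "nA p = pf (infA p)"
definition kA where "kA p = ps (infA p)"
definition topi where "topi p = (if odd (ps p) then pf p else nA p)"
definition isA where "isA p \<longleftrightarrow> ps p = 2 ^ eA p \<and> odd (ps (eA p))"
definition Lc where "Lc T p \<longleftrightarrow> odd (ps p) \<or> (isA p \<and> prod_encode (nA p, prod_encode (mA p, kA p)) \<in> T \<and> kA p = topi (pf p))"
definition nxt where "nxt p = (if odd (ps p) then p else pf p)"

inductive inF :: "nat set \<Rightarrow> nat \<Rightarrow> nat \<Rightarrow> bool" for T where
  mk: "inF T m (prod_encode (m, Suc (2 * z)))"
| ap: "prod_encode (n, prod_encode (m, k)) \<in> T \<Longrightarrow> inF T k x \<Longrightarrow>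
       inF T n (prod_encode (x, 2 ^ prod_encode (m, Suc (2 * prod_encode (n, k)))))"

lemma inF_mono: "inF T n p \<Longrightarrow> T \<subseteq> T' \<Longrightarrow> inF T' n p"
  by (induction rule: inF.induct) (auto intro: inF.intros)

lemma inF_finite: "inF T n p \<Longrightarrow> \<exists>F. finite F \<and> F \<subseteq> T \<and> inF F n p"
proof (induction rule: inF.induct)
  case (mk m z)
  then show ?case using inF.mk by blast
next
  case (ap n m k x)
  then obtain F where F: "finite F" "F \<subseteq> T" "inF F k x" by blast
  let ?G = "insert (prod_encode (n, prod_encode (m, k))) F"
  have "inF ?G k x" using F(3) inF_mono by blast
  then have "inF ?G n (prod_encode (x, 2 ^ prod_encode (m, Suc (2 * prod_encode (n, k)))))"
    by (intro inF.ap) auto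
  then show ?case using F ap(1) by (intro exI[of _ ?G]) auto
qed

lemma pow_pos_even: "0 < e \<Longrightarrow> \<not> odd ((2::nat) ^ e)"
  by simp

lemma apel:
  fixes x m n k :: nat
  defines "e \<equiv> prod_encode (m, Suc (2 * prod_encode (n, k)))"
  defines "p \<equiv> prod_encode (x, 2 ^ e)"
  shows "\<not> odd (ps p)" "eA p = e" "mA p = m" "nA p = n" "kA p = k" "isA p" "pf p = x"
    "topi p = n" "nxt p = x"
proof -
  have "Suc (2 * prod_encode (n, k)) \<le> e" unfolding e_def by (rule le_prod_encode_2)
  then have e0: "0 < e" by linarith
  show o: "\<not> odd (ps p)" unfolding p_def using e0 by simp
  show eA: "eA p = e" unfolding eA_def p_def by simp
  show "mA p = m" unfolding mA_def eA e_def by simp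
  have i: "infA p = prod_encode (n, k)" unfolding infA_def eA e_def by simp
  show nA: "nA p = n" unfolding nA_def i by simp
  show "kA p = k" unfolding kA_def i by simp
  show "isA p" unfolding isA_def eA unfolding p_def e_def by simp
  show "pf p = x" unfolding p_def by simp
  show "topi p = n" unfolding topi_def using o nA by simp
  show "nxt p = x" unfolding nxt_def p_def using o p_def by simp
qed

lemma mkel:
  shows "odd (ps (prod_encode (m, Suc (2 * z))))" "topi (prod_encode (m, Suc (2 * z))) = m"
    "nxt (prod_encode (m, Suc (2 * z))) = prod_encode (m, Suc (2 * z))"
  by (simp_all add: topi_def nxt_def)

lemma funpow_fix: "f p = p \<Longrightarrow> (f ^^ i) p = p"
  by (induction i) auto

lemma inF_spine: "inF T n p \<Longrightarrow> topi p = n \<and> (\<forall>i. Lc T ((nxt ^^ i) p))"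
proof (induction rule: inF.induct)
  case (mk m z)
  then show ?case using mkel[of m z] funpow_fix[of nxt] by (simp add: Lc_def)
next
  case (ap n m k x)
  let ?p = "prod_encode (x, 2 ^ prod_encode (m, Suc (2 * prod_encode (n, k))))"
  note A = apel[of x m n k]
  have L0: "Lc T ?p" unfolding Lc_def using A ap by simp
  have "Lc T ((nxt ^^ i) ?p)" for i
  proof (cases i)
    case 0 then show ?thesis using L0 by simp
  next
    case (Suc j)
    have "(nxt ^^ Suc j) ?p = (nxt ^^ j) (nxt ?p)" by (simp only: funpow_Suc_right o_apply)
    then have "(nxt ^^ i) ?p = (nxt ^^ j) x" using A Suc by simp
    then show ?thesis using ap by simp
  qed
  then show ?case using A by simp
qed

lemma pf_less: "0 < ps p \<Longrightarrow> pf p < p"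
proof -
  assume a: "0 < ps p"
  have "p = triangle (pf p + ps p) + pf p" using pe_pf_ps[of p] by (simp add: prod_encode_def)
  moreover have "0 < triangle (pf p + ps p)"
  proof -
    obtain s where "pf p + ps p = Suc s" using a by (metis add_gr_0 gr0_conv_Suc)
    then show ?thesis by simp
  qed
  ultimately show ?thesis by linarith
qed

lemma spine_inF: "topi p = n \<Longrightarrow> (\<forall>i. Lc T ((nxt ^^ i) p)) \<Longrightarrow> inF T n p"
proof (induction p arbitrary: n rule: less_induct)
  case (less p)
  have L0: "Lc T p" using less.prems(2) by (metis funpow_0)
  show ?case
  proof (cases "odd (ps p)")
    case True
    then obtain z where z: "ps p = Suc (2 * z)" by (metis oddE Suc_eq_plus1)
    have "pf p = n" using less.prems(1) True by (simp add: topi_def)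
    then have "p = prod_encode (n, Suc (2 * z))" using pe_pf_ps[of p] z by simp
    then show ?thesis using inF.mk[of T n z] by simp
  next
    case False
    then have A: "isA p" "prod_encode (nA p, prod_encode (mA p, kA p)) \<in> T" "kA p = topi (pf p)"
      using L0 unfolding Lc_def by auto
    have n: "nA p = n" using less.prems(1) False unfolding topi_def by simp
    have ps: "ps p = 2 ^ eA p" and oe: "odd (ps (eA p))" using A(1) unfolding isA_def by auto
    have "0 < ps p" using ps by simp
    then have lt: "pf p < p" by (rule pf_less)
    have nx: "nxt p = pf p" using False unfolding nxt_def by simp
    have "\<forall>i. Lc T ((nxt ^^ i) (pf p))"
    proof
      fix i
      have "(nxt ^^ Suc i) p = (nxt ^^ i) (nxt p)" by (simp only: funpow_Suc_right o_apply)
      then show "Lc T ((nxt ^^ i) (pf p))"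
        using less.prems(2) nx by metis
    qed
    then have IH: "inF T (kA p) (pf p)" using less.IH[OF lt] A(3) by simp
    have w: "ps (eA p) = Suc (2 * infA p)" using oe unfolding infA_def by simp
    have i: "infA p = prod_encode (nA p, kA p)" unfolding nA_def kA_def by (rule pe_pf_ps[symmetric])
    have "eA p = prod_encode (pf (eA p), ps (eA p))" by (rule pe_pf_ps[symmetric])
    also have "\<dots> = prod_encode (mA p, Suc (2 * prod_encode (nA p, kA p)))"
      unfolding mA_def w i ..
    finally have ee: "eA p = prod_encode (mA p, Suc (2 * prod_encode (nA p, kA p)))" .
    have "p = prod_encode (pf p, ps p)" by (rule pe_pf_ps[symmetric])
    also have "\<dots> = prod_encode (pf p, 2 ^ prod_encode (mA p, Suc (2 * prod_encode (nA p, kA p))))"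
      unfolding ps ee ..
    finally have pp: "p = prod_encode (pf p, 2 ^ prod_encode (mA p, Suc (2 * prod_encode (nA p, kA p))))" .
    show ?thesis
      using inF.ap[OF A(2) IH] n pp by simp
  qed
qed

lemma spine_bounded:
  assumes "\<forall>i<Suc p. Lc T ((nxt ^^ i) p)"
  shows "\<forall>i. Lc T ((nxt ^^ i) p)"
proof -
  have "\<exists>i\<le>p. odd (ps ((nxt ^^ i) p))"
  proof (rule ccontr)
    assume no: "\<not> (\<exists>i\<le>p. odd (ps ((nxt ^^ i) p)))"
    have dec: "i \<le> p \<Longrightarrow> (nxt ^^ i) p + i \<le> p" for i
    proof (induction i)
      case 0 then show ?case by simp
    next
      case (Suc i)
      define q where "q = (nxt ^^ i) p"
      have ip: "i \<le> p" using Suc.prems by simp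
      have ne: "\<not> odd (ps q)" using no ip unfolding q_def by blast
      have "Lc T q" using assms ip unfolding q_def by simp
      then have "isA q" using ne unfolding Lc_def by blast
      then have "0 < ps q" unfolding isA_def by simp
      then have "pf q < q" by (rule pf_less)
      moreover have "(nxt ^^ Suc i) p = pf q" using ne unfolding q_def nxt_def by simp
      moreover have "q + i \<le> p" using Suc.IH ip unfolding q_def by blast
      ultimately show ?case by linarith
    qed
    have z: "(nxt ^^ p) p = 0" using dec[of p] by simp
    have "Lc T ((nxt ^^ p) p)" using assms by simp
    moreover have "\<not> odd (ps ((nxt ^^ p) p))" using no by blast
    ultimately have "isA ((nxt ^^ p) p)" unfolding Lc_def by blast
    then have "isA 0" unfolding z .
    moreover have "ps 0 = 0"
    proof -
      have "prod_encode (0, 0) = 0" by (simp add: prod_encode_def)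
      then show ?thesis by (metis ps_pe)
    qed
    ultimately show False unfolding isA_def by simp
  qed
  then obtain i0 where i0: "i0 \<le> p" "odd (ps ((nxt ^^ i0) p))" by blast
  have fix0: "nxt ((nxt ^^ i0) p) = (nxt ^^ i0) p" using i0(2) unfolding nxt_def by simp
  have stab: "(nxt ^^ (d + i0)) p = (nxt ^^ i0) p" for d
  proof (induction d)
    case 0 then show ?case by simp
  next
    case (Suc d)
    have "(nxt ^^ (Suc d + i0)) p = nxt ((nxt ^^ (d + i0)) p)" by simp
    then show ?case using Suc fix0 by simp
  qed
  show ?thesis
  proof
    fix i
    show "Lc T ((nxt ^^ i) p)"
    proof (cases "i < Suc p")
      case True then show ?thesis using assms by simp
    next
      case False
      then have "i = (i - i0) + i0" using i0(1) by simp
      then have "(nxt ^^ i) p = (nxt ^^ i0) p" using stab by metis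
      then show ?thesis using assms i0(1) by simp
    qed
  qed
qed



lemma rfn_eA: "rfn k a \<Longrightarrow> rfn k (\<lambda>xs. eA (a xs))" unfolding eA_def by (intro rfn_lg rfn_ps)
lemma rfn_mA: "rfn k a \<Longrightarrow> rfn k (\<lambda>xs. mA (a xs))" unfolding mA_def by (intro rfn_pf rfn_eA)
lemma rfn_infA: "rfn k a \<Longrightarrow> rfn k (\<lambda>xs. infA (a xs))" unfolding infA_def by (intro rfn_div2 rfn_ps rfn_eA)
lemma rfn_nA: "rfn k a \<Longrightarrow> rfn k (\<lambda>xs. nA (a xs))" unfolding nA_def by (intro rfn_pf rfn_infA)
lemma rfn_kA: "rfn k a \<Longrightarrow> rfn k (\<lambda>xs. kA (a xs))" unfolding kA_def by (intro rfn_ps rfn_infA)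
lemma rfn_topi: "rfn k a \<Longrightarrow> rfn k (\<lambda>xs. topi (a xs))" unfolding topi_def
  by (intro rfn_if dec_odd rfn_ps rfn_pf rfn_nA)
lemma rfn_nxt: "rfn k a \<Longrightarrow> rfn k (\<lambda>xs. nxt (a xs))" unfolding nxt_def
  by (intro rfn_if dec_odd rfn_ps rfn_pf)
lemma dec_isA: "rfn k a \<Longrightarrow> dec k (\<lambda>xs. isA (a xs))" unfolding isA_def
  by (intro dec_and dec_eq dec_odd rfn_ps rfn_pow2 rfn_eA)
lemma dec_Lc: "rfn k v \<Longrightarrow> rfn k a \<Longrightarrow> dec k (\<lambda>xs. Lc (set_decode (v xs)) (a xs))" unfolding Lc_def
  by (intro dec_or dec_and dec_odd dec_isA dec_memD dec_eq rfn_ps rfn_pair rfn_nA rfn_mA rfn_kA rfn_topi rfn_pf)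

lemma prec_iter: "prec a (\<lambda>zs. nxt (zs ! 1)) t xs = (nxt ^^ t) (a xs)"
  by (induction t) auto

lemma rfn_iter: assumes "rfn k a" "rfn k t" shows "rfn k (\<lambda>xs. (nxt ^^ t xs) (a xs))"
proof -
  have "rfn k (\<lambda>xs. prec a (\<lambda>zs. nxt (zs ! 1)) (t xs) xs)"
    by (rule rfn_prec_at[OF assms(1) _ assms(2)]) (rule rfn_nxt[OF rfn_P1])
  then show ?thesis unfolding prec_iter .
qed

definition Cc :: "nat \<Rightarrow> nat \<Rightarrow> nat \<Rightarrow> nat \<Rightarrow> bool" where
  "Cc kk n0 y x \<longleftrightarrow>
     prod_encode (kk, prod_encode (n0, pf (ps y))) \<in> set_decode (ps x) \<and>
     prod_encode (pf (ps y), prod_encode (ps (ps y), pf y)) \<in> set_decode (ps x) \<and>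
     topi (pf x) = pf y \<and>
     (\<forall>i<Suc (pf x). Lc (set_decode (ps x)) ((nxt ^^ i) (pf x)))"

lemma Cc_ce: "ce {x. \<exists>y. Cc kk n0 y x}"
proof -
  have b: "dec (Suc 2) (\<lambda>ws. Lc (set_decode (ps (ws ! 2))) ((nxt ^^ (ws ! 0)) (pf (ws ! 2))))"
    by (intro dec_Lc rfn_ps rfn_iter rfn_pf rfn_Proj) auto
  have "dec 2 (\<lambda>zs. \<forall>i<Suc (pf (zs ! 1)). (\<lambda>ws. Lc (set_decode (ps (ws ! 2))) ((nxt ^^ (ws ! 0)) (pf (ws ! 2)))) (i # zs))"
    by (rule dec_ball[OF b]) (intro rfn_Suc rfn_pf rfn_Proj, simp)
  then have b2: "dec 2 (\<lambda>zs. \<forall>i<Suc (pf (zs ! 1)). Lc (set_decode (ps (zs ! 1))) ((nxt ^^ i) (pf (zs ! 1))))"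
    by (simp add: numeral_2_eq_2)
  have "dec 2 (\<lambda>zs. Cc kk n0 (zs ! 0) (zs ! 1))"
    unfolding Cc_def
    by (intro dec_and b2 dec_memD dec_eq rfn_pair rfn_const rfn_pf rfn_ps rfn_topi rfn_Proj) auto
  then have "rfn 2 (\<lambda>zs. if Cc kk n0 (zs ! 0) (zs ! 1) then 0 else 1)"
    by (intro rfn_if rfn_const)
  from rfn_ce[OF this] have "ce {x. \<exists>n. (if Cc kk n0 n x then 0 else 1::nat) = 0}" by simp
  moreover have "{x. \<exists>n. (if Cc kk n0 n x then 0 else 1::nat) = 0} = {x. \<exists>y. Cc kk n0 y x}" by auto
  ultimately show ?thesis by simp
qed

lemma Cc_pe: "Cc kk n0 (prod_encode (n, prod_encode (j, q))) (prod_encode (p, v)) \<longleftrightarrow>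
   prod_encode (kk, prod_encode (n0, j)) \<in> set_decode v \<and>
   prod_encode (j, prod_encode (q, n)) \<in> set_decode v \<and> inF (set_decode v) n p"
proof -
  let ?x = "prod_encode (p, v)" and ?y = "prod_encode (n, prod_encode (j, q))"
  have "(\<forall>i<Suc p. Lc (set_decode v) ((nxt ^^ i) p)) \<and> topi p = n \<longleftrightarrow> inF (set_decode v) n p"
  proof
    assume a: "(\<forall>i<Suc p. Lc (set_decode v) ((nxt ^^ i) p)) \<and> topi p = n"
    then have "\<forall>i. Lc (set_decode v) ((nxt ^^ i) p)" using spine_bounded by blast
    then show "inF (set_decode v) n p" using spine_inF a by blast
  next
    assume "inF (set_decode v) n p"
    then show "(\<forall>i<Suc p. Lc (set_decode v) ((nxt ^^ i) p)) \<and> topi p = n" using inF_spine by blast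
  qed
  then show ?thesis unfolding Cc_def by auto
qed



lemma inF_ps_nz: "inF T n p \<Longrightarrow> ps p \<noteq> 0"
  by (induction rule: inF.induct) auto

lemma inF_not0: "\<not> inF T n 0"
proof
  assume "inF T n 0"
  then have "ps 0 \<noteq> 0" by (rule inF_ps_nz)
  moreover have "prod_encode (0, 0) = 0" by (simp add: prod_encode_def)
  ultimately show False by (metis ps_pe)
qed

lemma inF_odd: "inF T n p \<Longrightarrow> odd (ps p) \<Longrightarrow> pf p = n"
proof (induction rule: inF.induct)
  case (mk m z) then show ?case by simp
next
  case (ap n m k x) then show ?case using apel(1)[of x m n k] by simp
qed

lemma set_decode_pow2: "set_decode (2 ^ e) = {e}"
proof -
  have "set_encode {e} = 2 ^ e" by simp
  then show ?thesis by (metis finite.emptyI finite.insertI set_encode_inverse)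
qed

theorem theorem7p1:
  fixes A :: "'a set" and ap :: "'a \<Rightarrow> 'a \<Rightarrow> 'a option" and \<gamma> :: "nat \<Rightarrow> 'a option"
    and X :: "nat set"
  assumes "pca A ap"
    and "partial_numbering \<gamma> A"
    and "X = {triple n m k | n m k. \<exists>a b c. \<gamma> n = Some a \<and> \<gamma> m = Some b \<and> \<gamma> k = Some c \<and> ap a b = Some c}"
  shows "(\<exists>f. pca_embedding A ap (GX X) Gap f) \<and> (\<exists>f. pca_embedding A ap (UNIV :: nat set set) Gap f)"
proof -
  have clos: "\<forall>a\<in>A. \<forall>b\<in>A. \<forall>c. ap a b = Some c \<longrightarrow> c \<in> A" using assms(1) unfolding pca_def by blast
  obtain k where kA: "k \<in> A" and kax: "\<forall>a\<in>A. \<forall>b\<in>A. papp ap (papp ap (Some k) (Some a)) (Some b) = Some a"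
    using assms(1) unfolding pca_def by blast
  have ran: "a \<in> A \<longleftrightarrow> (\<exists>n. \<gamma> n = Some a)" for a
    using assms(2) unfolding partial_numbering_def ran_def by blast
  have Xm: "triple n m k' \<in> X \<longleftrightarrow> (\<exists>a b c. \<gamma> n = Some a \<and> \<gamma> m = Some b \<and> \<gamma> k' = Some c \<and> ap a b = Some c)"
    for n m k' using assms(3) by auto
  obtain kk where kk: "\<gamma> kk = Some k" using ran kA by blast
  have kapp: "\<exists>c. ap k a = Some c \<and> c \<in> A \<and> (\<forall>b\<in>A. ap c b = Some a)" if a: "a \<in> A" for a
  proof -
    have e: "papp ap (papp ap (Some k) (Some a)) (Some a) = Some a" using kax a by blast
    then obtain c where c: "ap k a = Some c"
      by (cases "ap k a") auto
    have "c \<in> A" using clos kA a c by blast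
    moreover have "\<forall>b\<in>A. ap c b = Some a" using kax a c by auto
    ultimately show ?thesis using c by blast
  qed
  define F where "F a = {p. \<exists>n. \<gamma> n = Some a \<and> inF X n p}" for a
  define W where "W n0 = {x. \<exists>y. Cc kk n0 y x}" for n0
  have FW: "F a = gapp (W n0) X" if a: "a \<in> A" and n0: "\<gamma> n0 = Some a" for a n0
  proof
    show "gapp (W n0) X \<subseteq> F a"
    proof
      fix p assume "p \<in> gapp (W n0) X"
      then obtain u where u: "prod_encode (p, u) \<in> W n0" "set_decode u \<subseteq> X"
        unfolding gapp_def by blast
      then obtain y where "Cc kk n0 y (prod_encode (p, u))" unfolding W_def by blast
      moreover have "y = prod_encode (pf y, prod_encode (pf (ps y), ps (ps y)))"
        by (simp add: pe_pf_ps)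
      ultimately obtain n j q where y: "Cc kk n0 (prod_encode (n, prod_encode (j, q))) (prod_encode (p, u))"
        by metis
      then have y': "triple kk n0 j \<in> set_decode u \<and> triple j q n \<in> set_decode u \<and> inF (set_decode u) n p"
        by (simp only: Cc_pe)
      then have t1: "triple kk n0 j \<in> X" and t2: "triple j q n \<in> X" using u(2) by blast+
      have i: "inF X n p" using y' u(2) inF_mono by blast
      from t1 obtain k1 a1 c1 where "\<gamma> kk = Some k1" "\<gamma> n0 = Some a1" "\<gamma> j = Some c1" "ap k1 a1 = Some c1"
        unfolding Xm by blast
      then have c1: "\<gamma> j = Some c1" "ap k a = Some c1" using kk n0 by auto
      from t2 obtain c2 b d where "\<gamma> j = Some c2" "\<gamma> q = Some b" "\<gamma> n = Some d" "ap c2 b = Some d"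
        unfolding Xm by blast
      then have "b \<in> A" "\<gamma> n = Some d" "ap c1 b = Some d" using c1 ran by auto
      moreover have "ap c1 b = Some a" using kapp[OF a] c1 \<open>b \<in> A\<close> by auto
      ultimately have "\<gamma> n = Some a" by simp
      then show "p \<in> F a" unfolding F_def using i by blast
    qed
  next
    show "F a \<subseteq> gapp (W n0) X"
    proof
      fix p assume "p \<in> F a"
      then obtain n where n: "\<gamma> n = Some a" "inF X n p" unfolding F_def by blast
      obtain T where T: "finite T" "T \<subseteq> X" "inF T n p" using inF_finite[OF n(2)] by blast
      obtain c where c: "ap k a = Some c" "c \<in> A" "\<forall>b\<in>A. ap c b = Some a" using kapp[OF a] by blast
      obtain j where j: "\<gamma> j = Some c" using ran c(2) by blast
      have t1: "triple kk n0 j \<in> X" unfolding Xm using kk n0 j c(1) by blast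
      have "ap c a = Some a" using c(3) a by blast
      then have t2: "triple j n0 n \<in> X" unfolding Xm using j n0 n(1) by blast
      define T' where "T' = insert (triple kk n0 j) (insert (triple j n0 n) T)"
      have fT: "finite T'" using T(1) unfolding T'_def by simp
      have TX: "T' \<subseteq> X" using T(2) t1 t2 unfolding T'_def by blast
      have D: "set_decode (set_encode T') = T'" using fT by simp
      have iT: "inF T' n p" by (rule inF_mono[OF T(3)]) (auto simp: T'_def)
      have "triple kk n0 j \<in> T'" "triple j n0 n \<in> T'" unfolding T'_def by simp_all
      then have "Cc kk n0 (prod_encode (n, prod_encode (j, n0))) (prod_encode (p, set_encode T'))"
        using iT by (simp only: Cc_pe D simp_thms)
      then have "prod_encode (p, set_encode T') \<in> W n0" unfolding W_def by blast
      moreover have "set_decode (set_encode T') \<subseteq> X" using D TX by simp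
      ultimately show "p \<in> gapp (W n0) X" unfolding gapp_def by blast
    qed
  qed
  have FG: "F a \<in> GX X" if a: "a \<in> A" for a
  proof -
    obtain n0 where n0: "\<gamma> n0 = Some a" using ran a by blast
    have "W n0 \<in> GX X" unfolding W_def by (rule GX.ce[OF Cc_ce])
    then have "gapp (W n0) X \<in> GX X" by (rule GX.app[OF _ GX.base])
    then show ?thesis using FW[OF a n0] by simp
  qed
  have inj: "inj_on F A"
  proof (rule inj_onI)
    fix a a' assume a: "a \<in> A" "a' \<in> A" "F a = F a'"
    obtain m where m: "\<gamma> m = Some a" using ran a(1) by blast
    have "inF X m (prod_encode (m, Suc (2 * 0)))" by (rule inF.mk)
    then have "prod_encode (m, Suc (2 * 0)) \<in> F a" unfolding F_def using m by blast
    then have "prod_encode (m, Suc (2 * 0)) \<in> F a'" using a(3) by simp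
    then obtain n where n: "\<gamma> n = Some a'" "inF X n (prod_encode (m, Suc (2 * 0)))" unfolding F_def by blast
    have "pf (prod_encode (m, Suc (2 * 0))) = n" by (rule inF_odd[OF n(2)]) simp
    then have "m = n" by simp
    then show "a = a'" using m n by simp
  qed
  have appl: "gapp (F a) (F b) = F c" if ab: "a \<in> A" "b \<in> A" "ap a b = Some c" for a b c
  proof
    show "gapp (F a) (F b) \<subseteq> F c"
    proof
      fix x assume "x \<in> gapp (F a) (F b)"
      then obtain u where u: "prod_encode (x, u) \<in> F a" "set_decode u \<subseteq> F b" unfolding gapp_def by blast
      then obtain n where n: "\<gamma> n = Some a" "inF X n (prod_encode (x, u))" unfolding F_def by blast
      from n(2) show "x \<in> F c"
      proof (cases rule: inF.cases)
        case (mk z)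
        then have "0 \<in> set_decode u" by simp
        then have "0 \<in> F b" using u(2) by blast
        then show ?thesis unfolding F_def using inF_not0 by blast
      next
        case (ap m k' x')
        let ?e = "prod_encode (m, Suc (2 * prod_encode (n, k')))"
        have xu: "x = x'" "u = 2 ^ ?e" using ap(1) by simp_all
        then have "?e \<in> F b" using u(2) set_decode_pow2 by auto
        then obtain n'' where n'': "\<gamma> n'' = Some b" "inF X n'' ?e" unfolding F_def by blast
        have "pf ?e = n''" by (rule inF_odd[OF n''(2)]) simp
        then have mb: "\<gamma> m = Some b" using n'' by simp
        obtain a1 b1 c1 where "\<gamma> n = Some a1" "\<gamma> m = Some b1" "\<gamma> k' = Some c1" "ap a1 b1 = Some c1"
          using ap(2) Xm by blast
        then have "\<gamma> k' = Some c" using n(1) mb ab(3) by auto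
        then show ?thesis unfolding F_def using ap(3) xu by blast
      qed
    qed
  next
    show "F c \<subseteq> gapp (F a) (F b)"
    proof
      fix x assume "x \<in> F c"
      then obtain k' where k': "\<gamma> k' = Some c" "inF X k' x" unfolding F_def by blast
      obtain n where n: "\<gamma> n = Some a" using ran ab(1) by blast
      obtain m where m: "\<gamma> m = Some b" using ran ab(2) by blast
      have t: "triple n m k' \<in> X" using Xm n m k' ab(3) by blast
      let ?e = "prod_encode (m, Suc (2 * prod_encode (n, k')))"
      have "inF X n (prod_encode (x, 2 ^ ?e))" by (rule inF.ap[OF t k'(2)])
      then have "prod_encode (x, 2 ^ ?e) \<in> F a" unfolding F_def using n by blast
      moreover have "inF X m ?e" by (rule inF.mk)
      then have "set_decode (2 ^ ?e) \<subseteq> F b" unfolding F_def set_decode_pow2 using m by blast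
      ultimately show "x \<in> gapp (F a) (F b)" unfolding gapp_def by blast
    qed
  qed
  have emb: "pca_embedding A ap (GX X) Gap F"
    unfolding pca_embedding_def Gap_def using inj FG appl by blast
  moreover have "pca_embedding A ap (UNIV :: nat set set) Gap F"
    unfolding pca_embedding_def Gap_def using inj appl by blast
  ultimately show ?thesis by blast
qed

end
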